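(* Let $A$ be an integral domain with quotient field $\mathrm{qf}(A)$. Then the trivial ring extension $A\propto \mathrm{qf}(A)$ is an elementary divisor ring if and only if $A$ is an elementary divisor ring.
   Context: All rings are commutative with identity. For a ring $A$ and an $A$-module $E$, $A\propto E$ is the set of pairs $(a,e)$ with componentwise addition and multiplication $(a,e)(b,f)=(ab,af+be)$. A matrix $M$ (not necessarily square) admits diagonal reduction if there are invertible $P,Q$ with $PMQ$ diagonal $(d_{ij})$ and $d_{ii}\mid d_{(i+1)(i+1)}$ for each $i$; a ring is an elementary divisor ring if every matrix over it admits diagonal reduction. *)

theory Defs
  imports "HOL-Computational_Algebra.Fraction_Field" "Jordan_Normal_Form.Matrix"
begin

definition admits_diagonal_reduction :: "'a::comm_ring_1 mat \<Rightarrow> bool" where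
  "admits_diagonal_reduction M \<longleftrightarrow>
     (\<exists>P Q. P \<in> carrier_mat (dim_row M) (dim_row M) \<and> invertible_mat P \<and>
            Q \<in> carrier_mat (dim_col M) (dim_col M) \<and> invertible_mat Q \<and>
            (\<forall>i<dim_row M. \<forall>j<dim_col M. i \<noteq> j \<longrightarrow> (P * M * Q) $$ (i, j) = 0) \<and>
            (\<forall>i. Suc i < dim_row M \<and> Suc i < dim_col M \<longrightarrow>
                 (P * M * Q) $$ (i, i) dvd (P * M * Q) $$ (Suc i, Suc i)))"

definition elementary_divisor_ring :: "'a::comm_ring_1 itself \<Rightarrow> bool" where
  "elementary_divisor_ring _ \<longleftrightarrow> (\<forall>M :: 'a mat. admits_diagonal_reduction M)"

text \<open>Elements are pairs (a, e) with a in A and e in the quotient field 'a fract,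
where A acts on qf(A) by a \<cdot> e = (a/1) e.\<close>

declare [[typedef_overloaded]]
datatype ('a::idom) triv_ext_qf = TE 'a "'a fract"

fun te_fst :: "'a::idom triv_ext_qf \<Rightarrow> 'a" where "te_fst (TE a e) = a"
fun te_snd :: "'a::idom triv_ext_qf \<Rightarrow> 'a fract" where "te_snd (TE a e) = e"

lemma te_emb_mult: "Fraction_Field.Fract (a * b) 1 = Fraction_Field.Fract a 1 * (Fraction_Field.Fract b 1 :: 'a::idom fract)"
  by simp
lemma te_emb_add: "Fraction_Field.Fract (a + b) 1 = Fraction_Field.Fract a 1 + (Fraction_Field.Fract b 1 :: 'a::idom fract)"
  by simp
lemma te_emb_one: "Fraction_Field.Fract 1 1 = (1 :: 'a::idom fract)"
  by (simp add: One_fract_def)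

instantiation triv_ext_qf :: (idom) comm_ring_1
begin

definition zero_triv_ext_qf :: "'a triv_ext_qf" where "0 = TE 0 0"
definition one_triv_ext_qf :: "'a triv_ext_qf" where "1 = TE 1 0"
definition plus_triv_ext_qf :: "'a triv_ext_qf \<Rightarrow> 'a triv_ext_qf \<Rightarrow> 'a triv_ext_qf" where
  "x + y = TE (te_fst x + te_fst y) (te_snd x + te_snd y)"
definition uminus_triv_ext_qf :: "'a triv_ext_qf \<Rightarrow> 'a triv_ext_qf" where
  "- x = TE (- te_fst x) (- te_snd x)"
definition minus_triv_ext_qf :: "'a triv_ext_qf \<Rightarrow> 'a triv_ext_qf \<Rightarrow> 'a triv_ext_qf" where
  "x - y = TE (te_fst x - te_fst y) (te_snd x - te_snd y)"
definition times_triv_ext_qf :: "'a triv_ext_qf \<Rightarrow> 'a triv_ext_qf \<Rightarrow> 'a triv_ext_qf" where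
  "x * y = TE (te_fst x * te_fst y)
              (Fraction_Field.Fract (te_fst x) 1 * te_snd y + Fraction_Field.Fract (te_fst y) 1 * te_snd x)"

instance
proof
  fix a b c :: "'a triv_ext_qf"
  show "a * b * c = a * (b * c)"
    by (cases a; cases b; cases c)
       (simp add: times_triv_ext_qf_def algebra_simps)
  show "a * b = b * a"
    by (cases a; cases b) (simp add: times_triv_ext_qf_def algebra_simps)
  show "1 * a = a"
    by (cases a) (simp add: times_triv_ext_qf_def one_triv_ext_qf_def te_emb_one)
  show "(a + b) * c = a * c + b * c"
    by (cases a; cases b; cases c)
       (simp add: times_triv_ext_qf_def plus_triv_ext_qf_def algebra_simps,
        simp only: te_emb_add distrib_left)
  show "a + b + c = a + (b + c)"
    by (cases a; cases b; cases c) (simp add: plus_triv_ext_qf_def algebra_simps)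
  show "a + b = b + a"
    by (cases a; cases b) (simp add: plus_triv_ext_qf_def algebra_simps)
  show "0 + a = a"
    by (cases a) (simp add: plus_triv_ext_qf_def zero_triv_ext_qf_def)
  show "- a + a = 0"
    by (cases a) (simp add: plus_triv_ext_qf_def uminus_triv_ext_qf_def zero_triv_ext_qf_def)
  show "a - b = a + - b"
    by (cases a; cases b)
       (simp add: plus_triv_ext_qf_def uminus_triv_ext_qf_def minus_triv_ext_qf_def)
  show "(0::'a triv_ext_qf) \<noteq> 1"
    by (simp add: zero_triv_ext_qf_def one_triv_ext_qf_def)
qed

end

end

theory Submission
  imports Defs
begin

abbreviation emb :: "'a::idom \<Rightarrow> 'a fract" where "emb a \<equiv> Fraction_Field.Fract a 1"

lemma te_fst_add[simp]: "te_fst (x + y) = te_fst x + te_fst y" by (simp add: plus_triv_ext_qf_def)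
lemma te_snd_add[simp]: "te_snd (x + y) = te_snd x + te_snd y" by (simp add: plus_triv_ext_qf_def)
lemma te_fst_mult[simp]: "te_fst (x * y) = te_fst x * te_fst y" by (simp add: times_triv_ext_qf_def)
lemma te_snd_mult[simp]: "te_snd (x * y) = emb (te_fst x) * te_snd y + emb (te_fst y) * te_snd x"
  by (simp add: times_triv_ext_qf_def)
lemma te_fst_zero[simp]: "te_fst 0 = 0" by (simp add: zero_triv_ext_qf_def)
lemma te_snd_zero[simp]: "te_snd 0 = 0" by (simp add: zero_triv_ext_qf_def)
lemma te_fst_one[simp]: "te_fst 1 = 1" by (simp add: one_triv_ext_qf_def)
lemma te_snd_one[simp]: "te_snd 1 = 0" by (simp add: one_triv_ext_qf_def)
lemma te_fst_uminus[simp]: "te_fst (- x) = - te_fst x" by (simp add: uminus_triv_ext_qf_def)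
lemma te_snd_uminus[simp]: "te_snd (- x) = - te_snd x" by (simp add: uminus_triv_ext_qf_def)
lemma te_fst_sum: "te_fst (sum f S) = (\<Sum>x\<in>S. te_fst (f x))"
  by (induction S rule: infinite_finite_induct) auto
lemma te_snd_sum: "te_snd (sum f S) = (\<Sum>x\<in>S. te_snd (f x))"
  by (induction S rule: infinite_finite_induct) auto
lemma te_eq: "x = y \<longleftrightarrow> te_fst x = te_fst y \<and> te_snd x = te_snd y"
  by (cases x; cases y) auto
lemma TE_mult: "TE a e * TE b f = TE (a*b) (emb a * f + emb b * e)"
  by (simp add: times_triv_ext_qf_def)
lemma TE_zero: "TE 0 0 = 0" by (simp add: zero_triv_ext_qf_def)

definition fstM :: "'a::idom triv_ext_qf mat \<Rightarrow> 'a mat" where "fstM M = map_mat te_fst M"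
definition sndM :: "'a::idom triv_ext_qf mat \<Rightarrow> 'a fract mat" where "sndM M = map_mat te_snd M"
definition embM :: "'a::idom mat \<Rightarrow> 'a fract mat" where "embM M = map_mat emb M"
definition liftM :: "'a::idom mat \<Rightarrow> 'a triv_ext_qf mat" where "liftM M = map_mat (\<lambda>a. TE a 0) M"
definition mk :: "'a::idom mat \<Rightarrow> 'a fract mat \<Rightarrow> 'a triv_ext_qf mat" where
  "mk X Y = mat (dim_row X) (dim_col X) (\<lambda>ij. TE (X $$ ij) (Y $$ ij))"

lemma dims[simp]: "dim_row (fstM M) = dim_row M" "dim_col (fstM M) = dim_col M"
  "dim_row (sndM M) = dim_row M" "dim_col (sndM M) = dim_col M"
  "dim_row (embM X) = dim_row X" "dim_col (embM X) = dim_col X"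
  "dim_row (liftM X) = dim_row X" "dim_col (liftM X) = dim_col X"
  "dim_row (mk X Y) = dim_row X" "dim_col (mk X Y) = dim_col X"
  by (auto simp: fstM_def sndM_def embM_def liftM_def mk_def)

lemma idx[simp]: "i < dim_row M \<Longrightarrow> j < dim_col M \<Longrightarrow> fstM M $$ (i,j) = te_fst (M $$ (i,j))"
  "i < dim_row M \<Longrightarrow> j < dim_col M \<Longrightarrow> sndM M $$ (i,j) = te_snd (M $$ (i,j))"
  "i < dim_row X \<Longrightarrow> j < dim_col X \<Longrightarrow> embM X $$ (i,j) = emb (X $$ (i,j))"
  "i < dim_row X \<Longrightarrow> j < dim_col X \<Longrightarrow> liftM X $$ (i,j) = TE (X $$ (i,j)) 0"
  "i < dim_row X \<Longrightarrow> j < dim_col X \<Longrightarrow> mk X Y $$ (i,j) = TE (X $$ (i,j)) (Y $$ (i,j))"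
  by (auto simp: fstM_def sndM_def embM_def liftM_def mk_def)

lemma carr[simp]: "M \<in> carrier_mat m n \<Longrightarrow> fstM M \<in> carrier_mat m n"
  "M \<in> carrier_mat m n \<Longrightarrow> sndM M \<in> carrier_mat m n"
  "X \<in> carrier_mat m n \<Longrightarrow> embM X \<in> carrier_mat m n"
  "X \<in> carrier_mat m n \<Longrightarrow> liftM X \<in> carrier_mat m n"
  "X \<in> carrier_mat m n \<Longrightarrow> mk X Y \<in> carrier_mat m n"
  unfolding carrier_mat_def by simp_all

lemma mult_entry: "i < dim_row A \<Longrightarrow> j < dim_col B \<Longrightarrow> dim_col A = dim_row B \<Longrightarrow>
  (A * B) $$ (i,j) = (\<Sum>l<dim_row B. A $$ (i,l) * B $$ (l,j))"
  by (simp add: scalar_prod_def atLeast0LessThan)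

lemmas mdims = index_mult_mat(2,3)

lemma fstM_mult: assumes "dim_col A = dim_row B" shows "fstM (A * B) = fstM A * fstM B"
proof (rule eq_matI)
  fix i j assume ij: "i < dim_row (fstM A * fstM B)" "j < dim_col (fstM A * fstM B)"
  then have ij': "i < dim_row A" "j < dim_col B" by (simp_all add: mdims)
  show "fstM (A * B) $$ (i, j) = (fstM A * fstM B) $$ (i, j)"
    using ij' assms by (simp only: mult_entry idx mdims dims te_fst_sum te_fst_mult) (rule sum.cong; simp)
qed (simp_all add: mdims)

lemma sndM_mult: assumes "dim_col A = dim_row B"
  shows "sndM (A * B) = embM (fstM A) * sndM B + sndM A * embM (fstM B)"
proof (rule eq_matI)
  fix i j assume ij: "i < dim_row (embM (fstM A) * sndM B + sndM A * embM (fstM B))"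
     "j < dim_col (embM (fstM A) * sndM B + sndM A * embM (fstM B))"
  then have ij': "i < dim_row A" "j < dim_col B" by (simp_all add: mdims)
  have "sndM (A * B) $$ (i, j) = (\<Sum>l<dim_row B. te_snd (A $$ (i,l) * B $$ (l,j)))"
    using ij' assms by (simp only: mult_entry idx mdims dims te_snd_sum)
  also have "\<dots> = (\<Sum>l<dim_row B. emb (te_fst (A $$ (i,l))) * te_snd (B $$ (l,j)))
     + (\<Sum>l<dim_row B. te_snd (A $$ (i,l)) * emb (te_fst (B $$ (l,j))))"
    by (simp only: te_snd_mult sum.distrib mult.commute)
  also have "\<dots> = (embM (fstM A) * sndM B + sndM A * embM (fstM B)) $$ (i,j)"
    using ij' assms by (simp only: mdims mult_entry index_add_mat dims idx) (rule arg_cong2[where f="(+)"]; rule sum.cong; simp)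
  finally show "sndM (A * B) $$ (i, j) = (embM (fstM A) * sndM B + sndM A * embM (fstM B)) $$ (i, j)" .
qed (simp_all add: mdims)

lemma emb_zero[simp]: "emb 0 = (0::'a::idom fract)" by (simp add: fract_collapse)
lemma emb_one[simp]: "emb 1 = (1::'a::idom fract)" by (simp add: fract_collapse)
lemma emb_inj[simp]: "(emb a = (emb b :: 'a::idom fract)) \<longleftrightarrow> a = b" by (simp add: eq_fract)
lemma emb_eq0[simp]: "(emb a = (0 :: 'a::idom fract)) \<longleftrightarrow> a = 0" by (metis emb_inj fract_collapse(1))
lemma emb_uminus: "emb (- a) = - (emb a :: 'a::idom fract)" by simp

lemma emb_sum: "emb (sum f S) = (\<Sum>x\<in>S. emb (f x))"
  by (induction S rule: infinite_finite_induct) (auto simp: te_emb_add)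

lemma embM_mult: assumes "dim_col A = dim_row B" shows "embM (A * B) = embM A * embM B"
proof (rule eq_matI)
  fix i j assume ij: "i < dim_row (embM A * embM B)" "j < dim_col (embM A * embM B)"
  then have ij': "i < dim_row A" "j < dim_col B" by (simp_all add: mdims)
  show "embM (A * B) $$ (i, j) = (embM A * embM B) $$ (i, j)"
    using ij' assms by (simp only: mult_entry mdims idx dims emb_sum) (rule sum.cong; simp)
qed (simp_all add: mdims)

lemma fstM_lift[simp]: "fstM (liftM X) = X"
  by (rule eq_matI) simp_all
lemma sndM_lift[simp]: "sndM (liftM X) = 0\<^sub>m (dim_row X) (dim_col X)"
  by (rule eq_matI) simp_all
lemma fstM_mk[simp]: "fstM (mk X Y) = X"
  by (rule eq_matI) simp_all
lemma sndM_mk[simp]: "dim_row Y = dim_row X \<Longrightarrow> dim_col Y = dim_col X \<Longrightarrow> sndM (mk X Y) = Y"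
  by (rule eq_matI) simp_all

lemma matM_eq: assumes "dim_row M = dim_row N" "dim_col M = dim_col N"
  "fstM M = fstM N" "sndM M = sndM N" shows "M = N"
proof (rule eq_matI)
  fix i j assume ij: "i < dim_row N" "j < dim_col N"
  have "fstM M $$ (i,j) = fstM N $$ (i,j)" "sndM M $$ (i,j) = sndM N $$ (i,j)" using assms by simp_all
  moreover have "fstM M $$ (i,j) = te_fst (M$$(i,j))" "sndM M $$ (i,j) = te_snd (M$$(i,j))"
    "fstM N $$ (i,j) = te_fst (N$$(i,j))" "sndM N $$ (i,j) = te_snd (N$$(i,j))"
    using assms(1,2) ij by simp_all
  ultimately have "te_fst (M $$ (i,j)) = te_fst (N $$ (i,j))" "te_snd (M $$ (i,j)) = te_snd (N $$ (i,j))"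
    by simp_all
  then show "M $$ (i,j) = N $$ (i,j)" by (simp add: te_eq)
qed (use assms in simp_all)

lemma one_R: "1\<^sub>m n = mk (1\<^sub>m n) (0\<^sub>m n n)"
  by (rule eq_matI) (simp_all add: one_triv_ext_qf_def zero_triv_ext_qf_def)

lemma invI: assumes "P \<in> carrier_mat n n" "Q \<in> carrier_mat n n" "P * Q = 1\<^sub>m n" "Q * P = 1\<^sub>m n"
  shows "invertible_mat P"
  using assms unfolding invertible_mat_def inverts_mat_def square_mat.simps carrier_mat_def by auto

lemma invE: assumes "invertible_mat P" "P \<in> carrier_mat n n"
  obtains Q where "Q \<in> carrier_mat n n" "P * Q = 1\<^sub>m n" "Q * P = 1\<^sub>m n"
proof -
  obtain B where B: "P * B = 1\<^sub>m (dim_row P)" "B * P = 1\<^sub>m (dim_row B)"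
    using assms(1) unfolding invertible_mat_def inverts_mat_def by blast
  have "dim_col B = n" using B(1) assms(2) by (metis carrier_matD(1) index_mult_mat(3) index_one_mat(3))
  moreover have "dim_row B = n" using B(2) assms(2)
    by (metis carrier_matD(2) index_mult_mat(3) index_one_mat(3))
  ultimately show ?thesis using that[of B] B assms(2) by auto
qed

lemma inv_mult: assumes "invertible_mat P" "invertible_mat Q" "P \<in> carrier_mat n n" "Q \<in> carrier_mat n n"
  shows "invertible_mat (P * Q)"
proof -
  obtain P' where P': "P' \<in> carrier_mat n n" "P * P' = 1\<^sub>m n" "P' * P = 1\<^sub>m n" using invE assms(1,3) by blast
  obtain Q' where Q': "Q' \<in> carrier_mat n n" "Q * Q' = 1\<^sub>m n" "Q' * Q = 1\<^sub>m n" using invE assms(2,4) by blast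
  have a1: "Q * (Q' * P') = P'"
    using assoc_mult_mat[of Q n n Q' n P' n, symmetric] assms P' Q' by simp
  have 1: "(P * Q) * (Q' * P') = 1\<^sub>m n"
    using assoc_mult_mat[of P n n Q n "Q' * P'" n] a1 assms P' Q' by simp
  have a2: "P' * (P * Q) = Q"
    using assoc_mult_mat[of P' n n P n Q n, symmetric] assms P' Q' by simp
  have 2: "(Q' * P') * (P * Q) = 1\<^sub>m n"
    using assoc_mult_mat[of Q' n n P' n "P * Q" n] a2 assms P' Q' by simp
  show ?thesis by (rule invI[OF _ _ 1 2]) (use assms P' Q' in auto)
qed

lemma embM_one[simp]: "embM (1\<^sub>m n) = 1\<^sub>m n"
  by (rule eq_matI) simp_all

lemma fstM_one[simp]: "fstM (1\<^sub>m n) = 1\<^sub>m n"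
  by (rule eq_matI) simp_all

lemma liftM_one[simp]: "liftM (1\<^sub>m n) = 1\<^sub>m n"
  by (rule eq_matI) (simp_all add: one_triv_ext_qf_def zero_triv_ext_qf_def)

lemma liftM_mult: assumes "X \<in> carrier_mat m k" "Y \<in> carrier_mat k n"
  shows "liftM (X * Y) = liftM X * liftM Y"
proof (rule matM_eq)
  show "sndM (liftM (X * Y)) = sndM (liftM X * liftM Y)"
    using assms by (simp add: sndM_mult)
qed (use assms in \<open>simp_all add: fstM_mult\<close>)

lemma fstM_inv: assumes "invertible_mat P" "P \<in> carrier_mat n n" shows "invertible_mat (fstM P)"
proof -
  obtain Q where Q: "Q \<in> carrier_mat n n" "P * Q = 1\<^sub>m n" "Q * P = 1\<^sub>m n" using invE assms by blast
  have "fstM P * fstM Q = 1\<^sub>m n" "fstM Q * fstM P = 1\<^sub>m n"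
    using Q assms by (simp_all add: fstM_mult[symmetric])
  then show ?thesis by (rule invI[rotated 2]) (use Q assms in auto)
qed

lemma liftM_inv: assumes "invertible_mat P" "P \<in> carrier_mat n n" shows "invertible_mat (liftM P)"
proof -
  obtain Q where Q: "Q \<in> carrier_mat n n" "P * Q = 1\<^sub>m n" "Q * P = 1\<^sub>m n" using invE assms by blast
  have "liftM P * liftM Q = 1\<^sub>m n" "liftM Q * liftM P = 1\<^sub>m n"
    using Q assms by (simp_all add: liftM_mult[symmetric])
  then show ?thesis by (rule invI[rotated 2]) (use Q assms in auto)
qed

lemma te_fst_dvd: "x dvd y \<Longrightarrow> te_fst x dvd te_fst y"
  by (elim dvdE) simp

lemma adrE: assumes "admits_diagonal_reduction M"
  obtains P Q where "P \<in> carrier_mat (dim_row M) (dim_row M)" "invertible_mat P"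
    "Q \<in> carrier_mat (dim_col M) (dim_col M)" "invertible_mat Q"
    "\<And>i j. i<dim_row M \<Longrightarrow> j<dim_col M \<Longrightarrow> i \<noteq> j \<Longrightarrow> (P * M * Q) $$ (i, j) = 0"
    "\<And>i. Suc i < dim_row M \<Longrightarrow> Suc i < dim_col M \<Longrightarrow> (P * M * Q) $$ (i, i) dvd (P * M * Q) $$ (Suc i, Suc i)"
  using assms unfolding admits_diagonal_reduction_def
  apply (elim exE conjE)
  apply (rule that)
  apply assumption+
  apply blast
  apply blast
  done
lemma adrI: assumes "P \<in> carrier_mat (dim_row M) (dim_row M)" "invertible_mat P"
    "Q \<in> carrier_mat (dim_col M) (dim_col M)" "invertible_mat Q"
    "\<And>i j. i<dim_row M \<Longrightarrow> j<dim_col M \<Longrightarrow> i \<noteq> j \<Longrightarrow> (P * M * Q) $$ (i, j) = 0"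
    "\<And>i. Suc i < dim_row M \<Longrightarrow> Suc i < dim_col M \<Longrightarrow> (P * M * Q) $$ (i, i) dvd (P * M * Q) $$ (Suc i, Suc i)"
  shows "admits_diagonal_reduction M"
  unfolding admits_diagonal_reduction_def
  apply (rule exI[of _ P], rule exI[of _ Q])
  using assms by blast

lemma dir1: assumes "elementary_divisor_ring TYPE('a::idom triv_ext_qf)"
  shows "elementary_divisor_ring TYPE('a::idom)"
  unfolding elementary_divisor_ring_def
proof
  fix M :: "'a mat"
  define m n where "m = dim_row M" and "n = dim_col M"
  have M: "M \<in> carrier_mat m n" unfolding m_def n_def by (rule carrier_matI) simp_all
  have "admits_diagonal_reduction (liftM M)" using assms unfolding elementary_divisor_ring_def by blast
  then obtain P Q where P0: "P \<in> carrier_mat (dim_row (liftM M)) (dim_row (liftM M))" "invertible_mat P"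
    and Q0: "Q \<in> carrier_mat (dim_col (liftM M)) (dim_col (liftM M))" "invertible_mat Q"
    and off0: "\<And>i j. i<dim_row (liftM M) \<Longrightarrow> j<dim_col (liftM M) \<Longrightarrow> i \<noteq> j \<Longrightarrow> (P * liftM M * Q) $$ (i, j) = 0"
    and ch0: "\<And>i. Suc i < dim_row (liftM M) \<Longrightarrow> Suc i < dim_col (liftM M) \<Longrightarrow>
       (P * liftM M * Q) $$ (i, i) dvd (P * liftM M * Q) $$ (Suc i, Suc i)"
    by (rule adrE) (rule that)
  have P: "P \<in> carrier_mat m m" "invertible_mat P" using P0 by (simp_all add: m_def)
  have Q: "Q \<in> carrier_mat n n" "invertible_mat Q" using Q0 by (simp_all add: n_def)
  have eq: "fstM (P * liftM M * Q) = fstM P * M * fstM Q"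
    using P Q M by (simp add: fstM_mult)
  have ent: "(fstM P * M * fstM Q) $$ (i,j) = te_fst ((P * liftM M * Q) $$ (i,j))" if "i < m" "j < n" for i j
  proof -
    have "fstM (P * liftM M * Q) $$ (i,j) = te_fst ((P * liftM M * Q) $$ (i,j))"
      using that P Q by (intro idx) simp_all
    then show ?thesis by (simp only: eq)
  qed
  show "admits_diagonal_reduction M"
  proof (rule adrI)
    show "fstM P \<in> carrier_mat (dim_row M) (dim_row M)" "fstM Q \<in> carrier_mat (dim_col M) (dim_col M)"
      using P Q by (simp_all add: m_def n_def)
    show "invertible_mat (fstM P)" "invertible_mat (fstM Q)" using fstM_inv P Q by blast+
    fix i j assume "i < dim_row M" "j < dim_col M" "i \<noteq> j"
    then show "(fstM P * M * fstM Q) $$ (i, j) = 0" using ent[of i j] off0[of i j] by (simp add: m_def n_def)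
  next
    fix i assume "Suc i < dim_row M" "Suc i < dim_col M"
    then show "(fstM P * M * fstM Q) $$ (i, i) dvd (fstM P * M * fstM Q) $$ (Suc i, Suc i)"
      using ent[of i i] ent[of "Suc i" "Suc i"] ch0[of i] te_fst_dvd by (simp add: m_def n_def)
  qed
qed

lemma common_denom: "finite X \<Longrightarrow> \<exists>s::'a::idom. s \<noteq> 0 \<and> (\<forall>x\<in>X. \<exists>a. emb s * x = emb a)"
proof (induction X rule: finite_induct)
  case empty
  show ?case by (rule exI[of _ 1]) simp
next
  case (insert x X)
  then obtain s where s: "s \<noteq> 0" "\<forall>y\<in>X. \<exists>a. emb s * y = emb a" by blast
  obtain a b where x: "x = Fraction_Field.Fract a b" "b \<noteq> 0" by (cases x)
  have 1: "emb (s * b) * x = emb (s * a)" using x by (simp add: eq_fract)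
  have 2: "\<exists>c. emb (s * b) * y = emb c" if yX: "y \<in> X" for y
  proof -
    obtain c where "emb s * y = emb c" using bspec[OF s(2) yX] by (elim exE)
    then have "emb (s * b) * y = emb (b * c)" by (simp add: algebra_simps) (metis mult.left_commute mult_fract mult_1)
    then show ?thesis by blast
  qed
  show ?case using 1 2 s x by (intro exI[of _ "s * b"]) auto
qed

lemma dvd1: "a dvd b \<Longrightarrow> TE a 0 dvd TE b (0::'a::idom fract)"
proof (elim dvdE)
  fix k assume "b = a * k"
  then have "TE b 0 = TE a 0 * TE k 0" by (simp add: TE_mult)
  then show ?thesis by (rule dvdI)
qed

lemma dvd2: assumes "a \<noteq> 0" shows "TE a 0 dvd TE 0 (x::'a::idom fract)"
proof -
  have "emb a \<noteq> (0::'a fract)" using assms by simp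
  then have "TE 0 x = TE a 0 * TE 0 (x / emb a)" by (simp add: TE_mult)
  then show ?thesis by (rule dvdI)
qed

lemma dvd3: "c dvd c' \<Longrightarrow> TE 0 (y * emb c) dvd TE 0 ((y::'a::idom fract) * emb c')"
proof (elim dvdE)
  fix k assume "c' = c * k"
  then have "TE 0 (y * emb c') = TE 0 (y * emb c) * TE k 0" by (simp add: TE_mult algebra_simps)
  then show ?thesis by (rule dvdI)
qed

lemma sndM_one[simp]: "sndM (1\<^sub>m n) = 0\<^sub>m n n"
  by (rule eq_matI) (simp_all add: one_triv_ext_qf_def)

lemma mk_prod: assumes "C \<in> carrier_mat n n" "C' \<in> carrier_mat n n" "C + C' = 0\<^sub>m n n"
  shows "mk (1\<^sub>m n) C * mk (1\<^sub>m n) C' = 1\<^sub>m n"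
proof (rule matM_eq)
  show "fstM (mk (1\<^sub>m n) C * mk (1\<^sub>m n) C') = fstM (1\<^sub>m n)"
    by (simp add: fstM_mult)
  have "sndM (mk (1\<^sub>m n) C * mk (1\<^sub>m n) C') = C' + C"
    using assms(1,2) by (simp add: sndM_mult)
  also have "\<dots> = 0\<^sub>m n n" using assms by (metis comm_add_mat)
  finally show "sndM (mk (1\<^sub>m n) C * mk (1\<^sub>m n) C') = sndM (1\<^sub>m n)" by simp
qed simp_all

lemma mk_inv: assumes "C \<in> carrier_mat n n" shows "invertible_mat (mk (1\<^sub>m n) C)"
proof (rule invI)
  show "mk (1\<^sub>m n) C * mk (1\<^sub>m n) (- C) = 1\<^sub>m n"
    by (rule mk_prod) (use assms in \<open>auto intro!: eq_matI\<close>)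
  show "mk (1\<^sub>m n) (- C) * mk (1\<^sub>m n) C = 1\<^sub>m n"
    by (rule mk_prod) (use assms in \<open>auto intro!: eq_matI\<close>)
qed (use assms in auto)

lemma blk_inv: assumes "invertible_mat P" "P \<in> carrier_mat k k"
  shows "invertible_mat (four_block_mat (1\<^sub>m r) (0\<^sub>m r k) (0\<^sub>m k r) P)"
proof -
  obtain P' where P': "P' \<in> carrier_mat k k" "P * P' = 1\<^sub>m k" "P' * P = 1\<^sub>m k" using invE assms by blast
  have "four_block_mat (1\<^sub>m r) (0\<^sub>m r k) (0\<^sub>m k r) P * four_block_mat (1\<^sub>m r) (0\<^sub>m r k) (0\<^sub>m k r) P'
     = 1\<^sub>m (r + k)"
    using assms P' by (simp add: mult_four_block_mat[OF one_carrier_mat zero_carrier_mat zero_carrier_mat assms(2)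
        one_carrier_mat zero_carrier_mat zero_carrier_mat P'(1)])
  moreover have "four_block_mat (1\<^sub>m r) (0\<^sub>m r k) (0\<^sub>m k r) P' * four_block_mat (1\<^sub>m r) (0\<^sub>m r k) (0\<^sub>m k r) P
     = 1\<^sub>m (r + k)"
    using assms P' by (simp add: mult_four_block_mat[OF one_carrier_mat zero_carrier_mat zero_carrier_mat P'(1)
        one_carrier_mat zero_carrier_mat zero_carrier_mat assms(2)])
  ultimately show ?thesis
    by (intro invI[of _ "r + k"]) (use assms P' in auto)
qed

lemma embM_blk: assumes "P \<in> carrier_mat k k"
  shows "embM (four_block_mat (1\<^sub>m r) (0\<^sub>m r k) (0\<^sub>m k r) P) = four_block_mat (1\<^sub>m r) (0\<^sub>m r k) (0\<^sub>m k r) (embM P)"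
  by (rule eq_matI) (use assms in auto)

lemma dir2: assumes edr: "elementary_divisor_ring TYPE('a::idom)"
  shows "elementary_divisor_ring TYPE('a triv_ext_qf)"
  unfolding elementary_divisor_ring_def
proof
  fix M :: "'a triv_ext_qf mat"
  define m n where "m = dim_row M" and "n = dim_col M"
  have M: "M \<in> carrier_mat m n" unfolding m_def n_def by (rule carrier_matI) simp_all
  define N where "N = fstM M"
  have Nc: "N \<in> carrier_mat m n" using M by (simp add: N_def)
  have "admits_diagonal_reduction N" using edr unfolding elementary_divisor_ring_def by blast
  then obtain P1 Q1 where P10: "P1 \<in> carrier_mat (dim_row N) (dim_row N)" "invertible_mat P1"
    and Q10: "Q1 \<in> carrier_mat (dim_col N) (dim_col N)" "invertible_mat Q1"
    and off0: "\<And>i j. i<dim_row N \<Longrightarrow> j<dim_col N \<Longrightarrow> i \<noteq> j \<Longrightarrow> (P1 * N * Q1) $$ (i, j) = 0"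
    and ch0: "\<And>i. Suc i < dim_row N \<Longrightarrow> Suc i < dim_col N \<Longrightarrow>
       (P1 * N * Q1) $$ (i, i) dvd (P1 * N * Q1) $$ (Suc i, Suc i)"
    by (rule adrE) (rule that)
  have dN: "dim_row N = m" "dim_col N = n" using Nc by auto
  have P1: "P1 \<in> carrier_mat m m" "invertible_mat P1" using P10 dN by simp_all
  have Q1: "Q1 \<in> carrier_mat n n" "invertible_mat Q1" using Q10 dN by simp_all
  define D where "D = P1 * N * Q1"
  have Dc: "D \<in> carrier_mat m n" using P1 Q1 Nc by (simp add: D_def)
  have Doff: "\<And>i j. i<m \<Longrightarrow> j<n \<Longrightarrow> i \<noteq> j \<Longrightarrow> D $$ (i, j) = 0"
    using off0 dN by (simp add: D_def)
  have Dch: "\<And>i. Suc i < m \<Longrightarrow> Suc i < n \<Longrightarrow> D $$ (i, i) dvd D $$ (Suc i, Suc i)"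
    using ch0 dN by (simp add: D_def)
  define d where "d i = D $$ (i, i)" for i
  define k where "k = min m n"
  define r where "r = (if \<exists>i<k. d i = 0 then LEAST i. i < k \<and> d i = 0 else k)"
  have rk: "r \<le> k"
  proof (cases "\<exists>i<k. d i = 0")
    case True
    then obtain i where "i < k" "d i = 0" by blast
    then have "(LEAST i. i < k \<and> d i = 0) \<le> i" by (intro Least_le) simp
    then show ?thesis using True \<open>i < k\<close> by (simp add: r_def)
  qed (auto simp: r_def)
  have dnz: "d i \<noteq> 0" if "i < r" for i
  proof
    assume "d i = 0"
    moreover have "i < k" using that rk by simp
    ultimately have ex: "\<exists>i<k. d i = 0" by blast
    then have "r = (LEAST i. i < k \<and> d i = 0)" by (simp add: r_def)
    moreover have "(LEAST i. i < k \<and> d i = 0) \<le> i" using \<open>d i = 0\<close> \<open>i < k\<close> by (intro Least_le) simp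
    ultimately show False using that by simp
  qed
  have dz: "d i = 0" if "r \<le> i" "i < k" for i
    using that(1)
  proof (induction i rule: dec_induct)
    case base
    have ex: "\<exists>i<k. d i = 0"
    proof (rule ccontr)
      assume "\<not> (\<exists>i<k. d i = 0)"
      then have "r = k" by (auto simp: r_def)
      then show False using that by simp
    qed
    then have "r = (LEAST i. i < k \<and> d i = 0)" by (simp add: r_def)
    moreover have "(LEAST i. i < k \<and> d i = 0) < k \<and> d (LEAST i. i < k \<and> d i = 0) = 0"
      using ex by (rule LeastI_ex)
    ultimately show ?case by simp
  next
    case (step j)
    have "Suc j < m" "Suc j < n" using step.hyps that(2) by (auto simp: k_def)
    then have "d j dvd d (Suc j)" using Dch by (simp add: d_def)
    then show ?case using step.IH by simp
  qed
  have rm: "r \<le> m" "r \<le> n" using rk by (simp_all add: k_def)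
  have Dent: "D $$ (i, j) = (if i = j \<and> i < r then d i else 0)" if "i < m" "j < n" for i j
  proof (cases "i = j")
    case True
    then show ?thesis using that dz[of i] by (auto simp: d_def k_def)
  qed (use that Doff in simp)
  define F where "F = liftM P1 * M * liftM Q1"
  have Fc: "F \<in> carrier_mat m n" unfolding F_def
    by (rule mult_carrier_mat[OF mult_carrier_mat[OF carr(4)[OF P1(1)] M] carr(4)[OF Q1(1)]])
  have fF: "fstM F = D" using P1 Q1 M by (simp add: F_def D_def N_def fstM_mult)
  define G where "G = sndM F"
  have Gc: "G \<in> carrier_mat m n" using Fc by (simp add: G_def)
  define C where "C = mat m m (\<lambda>(i,j). if j < r then G $$ (i,j) / emb (d j) else 0)"
  define C' where "C' = mat n n (\<lambda>(i,j). if i < r \<and> r \<le> j then G $$ (i,j) / emb (d i) else 0)"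
  have Cc: "C \<in> carrier_mat m m" and C'c: "C' \<in> carrier_mat n n" by (simp_all add: C_def C'_def)
  define L where "L = mk (1\<^sub>m m) (- C)"
  define R where "R = mk (1\<^sub>m n) (- C')"
  have Lc: "L \<in> carrier_mat m m" and Rc: "R \<in> carrier_mat n n" by (simp_all add: L_def R_def)
  have Linv: "invertible_mat L" unfolding L_def by (rule mk_inv) (use Cc in simp)
  have Rinv: "invertible_mat R" unfolding R_def by (rule mk_inv) (use C'c in simp)
  define F2 where "F2 = L * F * R"
  have F2c: "F2 \<in> carrier_mat m n" unfolding F2_def
    by (rule mult_carrier_mat[OF mult_carrier_mat[OF Lc Fc] Rc])
  have fF2: "fstM F2 = D" using Lc Fc Rc Dc by (simp add: F2_def fstM_mult fF L_def R_def)
  define H where "H = sndM F2"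
  have Hc: "H \<in> carrier_mat m n" using F2c by (simp add: H_def)
  have Hform: "H = - (embM D * C') + (G + - (C * embM D))"
  proof -
    have "H = embM (fstM (L * F)) * sndM R + sndM (L * F) * embM (fstM R)"
      unfolding H_def F2_def by (rule sndM_mult) (use Lc Fc Rc in simp)
    also have "fstM (L * F) = D" using Lc Fc Dc by (simp add: fstM_mult fF L_def)
    also have "sndM (L * F) = embM (fstM L) * G + sndM L * embM D"
      using Lc Fc by (simp add: sndM_mult G_def fF)
    also have "fstM L = 1\<^sub>m m" by (simp add: L_def)
    also have "sndM L = - C" using Cc by (simp add: L_def)
    also have "fstM R = 1\<^sub>m n" by (simp add: R_def)
    also have "sndM R = - C'" using C'c by (simp add: R_def)
    finally show ?thesis using Cc C'c Gc Dc by simp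
  qed
  have E1: "(embM D * C') $$ (i, j) = (if i < r \<and> r \<le> j then G $$ (i,j) else 0)" if "i < m" "j < n" for i j
  proof -
    have "(embM D * C') $$ (i, j) = (\<Sum>l<n. embM D $$ (i,l) * C' $$ (l,j))"
      using that Dc C'c by (simp del: index_mult_mat add: mult_entry)
    also have "\<dots> = (\<Sum>l<n. if l = i then (if i < r then emb (d i) * C' $$ (i,j) else 0) else 0)"
      by (rule sum.cong) (use that Dc Dent in auto)
    also have "\<dots> = (if i < r then emb (d i) * C' $$ (i,j) else 0)"
      using that rm by (simp add: sum.delta)
    also have "\<dots> = (if i < r \<and> r \<le> j then G $$ (i,j) else 0)"
      using that rm dnz[of i] by (auto simp: C'_def)
    finally show ?thesis .
  qed
  have E2: "(C * embM D) $$ (i, j) = (if j < r then G $$ (i,j) else 0)" if "i < m" "j < n" for i j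
  proof -
    have "(C * embM D) $$ (i, j) = (\<Sum>l<m. C $$ (i,l) * embM D $$ (l,j))"
      using that Dc Cc by (simp del: index_mult_mat add: mult_entry)
    also have "\<dots> = (\<Sum>l<m. if l = j then (if j < r then C $$ (i,j) * emb (d j) else 0) else 0)"
      by (rule sum.cong) (use that Dc Dent in auto)
    also have "\<dots> = (if j < r then C $$ (i,j) * emb (d j) else 0)"
      using that rm by (simp add: sum.delta)
    also have "\<dots> = (if j < r then G $$ (i,j) else 0)"
      using that rm dnz[of j] by (auto simp: C_def)
    finally show ?thesis .
  qed
  have Hent: "H $$ (i, j) = (if i < r \<or> j < r then 0 else G $$ (i,j))" if "i < m" "j < n" for i j
    using that Dc Cc C'c Gc E1 E2 by (simp add: Hform)
  define m' where "m' = m - r"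
  define n' where "n' = n - r"
  have mr: "r + m' = m" "r + n' = n" using rm by (simp_all add: m'_def n'_def)
  have fin: "finite ((\<lambda>(i,j). H $$ (i,j)) ` ({..<m} \<times> {..<n}))" by simp
  obtain s where s: "s \<noteq> 0" "\<forall>x\<in>(\<lambda>(i,j). H $$ (i,j)) ` ({..<m} \<times> {..<n}). \<exists>a. emb s * x = emb a"
    using common_denom[OF fin] by blast
  have sH: "\<exists>a. emb s * H $$ (i,j) = emb a" if "i < m" "j < n" for i j
  proof -
    have "H $$ (i,j) \<in> (\<lambda>(i,j). H $$ (i,j)) ` ({..<m} \<times> {..<n})" using that by force
    then show ?thesis using s(2) by blast
  qed
  define Hb' where "Hb' = mat m' n' (\<lambda>(i,j). SOME a. emb s * H $$ (i+r, j+r) = emb a)"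
  have Hb'c: "Hb' \<in> carrier_mat m' n'" by (simp add: Hb'_def)
  have Hb'e: "emb (Hb' $$ (i,j)) = emb s * H $$ (i+r, j+r)" if "i < m'" "j < n'" for i j
  proof -
    have "\<exists>a. emb s * H $$ (i+r,j+r) = emb a" using sH that by (simp add: m'_def n'_def)
    then have "emb s * H $$ (i+r,j+r) = emb (SOME a. emb s * H $$ (i+r, j+r) = emb a)" by (rule someI_ex)
    then show ?thesis using that by (simp add: Hb'_def)
  qed
  have "admits_diagonal_reduction Hb'" using edr unfolding elementary_divisor_ring_def by blast
  then obtain P' Q' where P'0: "P' \<in> carrier_mat (dim_row Hb') (dim_row Hb')" "invertible_mat P'"
    and Q'0: "Q' \<in> carrier_mat (dim_col Hb') (dim_col Hb')" "invertible_mat Q'"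
    and off1: "\<And>i j. i<dim_row Hb' \<Longrightarrow> j<dim_col Hb' \<Longrightarrow> i \<noteq> j \<Longrightarrow> (P' * Hb' * Q') $$ (i, j) = 0"
    and ch1: "\<And>i. Suc i < dim_row Hb' \<Longrightarrow> Suc i < dim_col Hb' \<Longrightarrow>
       (P' * Hb' * Q') $$ (i, i) dvd (P' * Hb' * Q') $$ (Suc i, Suc i)"
    by (rule adrE) (rule that)
  have dHb: "dim_row Hb' = m'" "dim_col Hb' = n'" using Hb'c by auto
  have P': "P' \<in> carrier_mat m' m'" "invertible_mat P'" using P'0 dHb by simp_all
  have Q': "Q' \<in> carrier_mat n' n'" "invertible_mat Q'" using Q'0 dHb by simp_all
  define B where "B = P' * Hb' * Q'"
  have Boff: "\<And>i j. i<m' \<Longrightarrow> j<n' \<Longrightarrow> i \<noteq> j \<Longrightarrow> B $$ (i, j) = 0"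
    using off1 dHb by (simp add: B_def)
  have Bch: "\<And>i. Suc i < m' \<Longrightarrow> Suc i < n' \<Longrightarrow> B $$ (i, i) dvd B $$ (Suc i, Suc i)"
    using ch1 dHb by (simp add: B_def)
  define P2 where "P2 = four_block_mat (1\<^sub>m r) (0\<^sub>m r m') (0\<^sub>m m' r) P'"
  define Q2 where "Q2 = four_block_mat (1\<^sub>m r) (0\<^sub>m r n') (0\<^sub>m n' r) Q'"
  have P2c: "P2 \<in> carrier_mat m m"
    unfolding P2_def mr(1)[symmetric] by (rule four_block_carrier_mat[OF one_carrier_mat P'(1)])
  have Q2c: "Q2 \<in> carrier_mat n n"
    unfolding Q2_def mr(2)[symmetric] by (rule four_block_carrier_mat[OF one_carrier_mat Q'(1)])
  have P2inv: "invertible_mat P2" unfolding P2_def by (rule blk_inv[OF P'(2,1)])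
  have Q2inv: "invertible_mat Q2" unfolding Q2_def by (rule blk_inv[OF Q'(2,1)])
  define Dr where "Dr = mat r r (\<lambda>(i,j). D $$ (i,j))"
  have Drc: "Dr \<in> carrier_mat r r" by (simp add: Dr_def)
  have Dblk: "D = four_block_mat Dr (0\<^sub>m r n') (0\<^sub>m m' r) (0\<^sub>m m' n')"
    by (rule eq_matI) (use Dc Dent mr in \<open>auto simp: Dr_def\<close>)
  define Hb where "Hb = mat m' n' (\<lambda>(i,j). H $$ (i+r, j+r))"
  have Hbc: "Hb \<in> carrier_mat m' n'" by (simp add: Hb_def)
  have Hblk: "H = four_block_mat (0\<^sub>m r r) (0\<^sub>m r n') (0\<^sub>m m' r) Hb"
    by (rule eq_matI) (use Hc Hent mr in \<open>auto simp: Hb_def\<close>)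
  have PD: "P2 * D = D"
  proof -
    have "P2 * D = four_block_mat (1\<^sub>m r * Dr + 0\<^sub>m r m' * 0\<^sub>m m' r) (1\<^sub>m r * 0\<^sub>m r n' + 0\<^sub>m r m' * 0\<^sub>m m' n')
       (0\<^sub>m m' r * Dr + P' * 0\<^sub>m m' r) (0\<^sub>m m' r * 0\<^sub>m r n' + P' * 0\<^sub>m m' n')"
      unfolding P2_def by (subst Dblk) (rule mult_four_block_mat[OF one_carrier_mat zero_carrier_mat zero_carrier_mat P'(1) Drc zero_carrier_mat zero_carrier_mat zero_carrier_mat])
    also have "\<dots> = D" using P'(1) Drc by (subst Dblk) simp
    finally show ?thesis .
  qed
  have DQ: "D * Q2 = D"
  proof -
    have "D * Q2 = four_block_mat (Dr * 1\<^sub>m r + 0\<^sub>m r n' * 0\<^sub>m n' r) (Dr * 0\<^sub>m r n' + 0\<^sub>m r n' * Q')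
       (0\<^sub>m m' r * 1\<^sub>m r + 0\<^sub>m m' n' * 0\<^sub>m n' r) (0\<^sub>m m' r * 0\<^sub>m r n' + 0\<^sub>m m' n' * Q')"
      unfolding Q2_def by (subst Dblk) (rule mult_four_block_mat[OF Drc zero_carrier_mat zero_carrier_mat zero_carrier_mat one_carrier_mat zero_carrier_mat zero_carrier_mat Q'(1)])
    also have "\<dots> = D" using Q'(1) Drc by (subst Dblk) simp
    finally show ?thesis .
  qed
  have ePHQ: "embM P2 * H * embM Q2 = four_block_mat (0\<^sub>m r r) (0\<^sub>m r n') (0\<^sub>m m' r) (embM P' * Hb * embM Q')"
  proof -
    have e1: "embM P2 * H = four_block_mat (0\<^sub>m r r) (0\<^sub>m r n') (0\<^sub>m m' r) (embM P' * Hb)"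
    proof -
      have "embM P2 * H = four_block_mat (1\<^sub>m r * 0\<^sub>m r r + 0\<^sub>m r m' * 0\<^sub>m m' r) (1\<^sub>m r * 0\<^sub>m r n' + 0\<^sub>m r m' * Hb)
         (0\<^sub>m m' r * 0\<^sub>m r r + embM P' * 0\<^sub>m m' r) (0\<^sub>m m' r * 0\<^sub>m r n' + embM P' * Hb)"
        unfolding P2_def embM_blk[OF P'(1)] by (subst Hblk) (rule mult_four_block_mat[OF one_carrier_mat zero_carrier_mat zero_carrier_mat carr(3)[OF P'(1)] zero_carrier_mat zero_carrier_mat zero_carrier_mat Hbc])
      also have "\<dots> = four_block_mat (0\<^sub>m r r) (0\<^sub>m r n') (0\<^sub>m m' r) (embM P' * Hb)"
        using P'(1) Hbc mult_carrier_mat[OF carr(3)[OF P'(1)] Hbc] by simp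
      finally show ?thesis .
    qed
    have "embM P2 * H * embM Q2 = four_block_mat (0\<^sub>m r r * 1\<^sub>m r + 0\<^sub>m r n' * 0\<^sub>m n' r) (0\<^sub>m r r * 0\<^sub>m r n' + 0\<^sub>m r n' * embM Q')
         (0\<^sub>m m' r * 1\<^sub>m r + (embM P' * Hb) * 0\<^sub>m n' r) (0\<^sub>m m' r * 0\<^sub>m r n' + (embM P' * Hb) * embM Q')"
      unfolding e1 Q2_def embM_blk[OF Q'(1)] by (rule mult_four_block_mat[OF zero_carrier_mat zero_carrier_mat zero_carrier_mat mult_carrier_mat[OF carr(3)[OF P'(1)] Hbc] one_carrier_mat zero_carrier_mat zero_carrier_mat carr(3)[OF Q'(1)]])
    also have "\<dots> = four_block_mat (0\<^sub>m r r) (0\<^sub>m r n') (0\<^sub>m m' r) (embM P' * Hb * embM Q')"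
      using P'(1) Q'(1) Hbc mult_carrier_mat[OF mult_carrier_mat[OF carr(3)[OF P'(1)] Hbc] carr(3)[OF Q'(1)]] by simp
    finally show ?thesis .
  qed
  have es: "emb s \<noteq> (0::'a fract)" using s(1) by simp
  define c where "c = inverse (emb s :: 'a fract)"
  have Hbs: "Hb = c \<cdot>\<^sub>m embM Hb'"
  proof (rule eq_matI)
    fix i j assume ij: "i < dim_row (c \<cdot>\<^sub>m embM Hb')" "j < dim_col (c \<cdot>\<^sub>m embM Hb')"
    then have ij': "i < m'" "j < n'" using Hb'c by auto
    have "(c \<cdot>\<^sub>m embM Hb') $$ (i,j) = c * (emb s * H $$ (i+r, j+r))"
      using ij' Hb'c Hb'e by simp
    also have "\<dots> = H $$ (i+r, j+r)" unfolding c_def by (simp only: mult.assoc[symmetric] left_inverse[OF es] mult_1)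
    finally show "Hb $$ (i,j) = (c \<cdot>\<^sub>m embM Hb') $$ (i,j)" using ij' by (simp add: Hb_def)
  qed (use Hb'c in \<open>simp_all add: Hb_def\<close>)
  have PHQ: "embM P' * Hb * embM Q' = c \<cdot>\<^sub>m embM B"
  proof -
    have "embM P' * Hb * embM Q' = (c \<cdot>\<^sub>m (embM P' * embM Hb')) * embM Q'"
      unfolding Hbs by (subst mult_smult_distrib[OF carr(3)[OF P'(1)] carr(3)[OF Hb'c]]) (rule refl)
    also have "\<dots> = c \<cdot>\<^sub>m (embM P' * embM Hb' * embM Q')"
      by (rule mult_smult_assoc_mat[OF mult_carrier_mat[OF carr(3)[OF P'(1)] carr(3)[OF Hb'c]] carr(3)[OF Q'(1)]])
    also have "embM P' * embM Hb' * embM Q' = embM B"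
    proof -
      have "embM B = embM (P' * Hb') * embM Q'" unfolding B_def by (rule embM_mult) (use P'(1) Hb'c Q'(1) in simp)
      also have "embM (P' * Hb') = embM P' * embM Hb'" by (rule embM_mult) (use P'(1) Hb'c in simp)
      finally show ?thesis by simp
    qed
    finally show ?thesis .
  qed
  define F3 where "F3 = liftM P2 * F2 * liftM Q2"
  have F3c: "F3 \<in> carrier_mat m n" unfolding F3_def
    by (rule mult_carrier_mat[OF mult_carrier_mat[OF carr(4)[OF P2c] F2c] carr(4)[OF Q2c]])
  have fF3: "fstM F3 = D"
  proof -
    have "fstM F3 = fstM (liftM P2 * F2) * fstM (liftM Q2)" unfolding F3_def
      by (rule fstM_mult) (use P2c F2c Q2c in simp)
    also have "fstM (liftM P2 * F2) = fstM (liftM P2) * fstM F2" by (rule fstM_mult) (use P2c F2c in simp)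
    finally have "fstM F3 = P2 * D * Q2" by (simp add: fF2)
    also have "\<dots> = D" using PD DQ by simp
    finally show ?thesis .
  qed
  have sF3: "sndM F3 = embM P2 * H * embM Q2"
  proof -
    have "sndM F3 = embM (fstM (liftM P2 * F2)) * sndM (liftM Q2) + sndM (liftM P2 * F2) * embM (fstM (liftM Q2))"
      unfolding F3_def by (rule sndM_mult) (use P2c F2c Q2c in simp)
    also have "sndM (liftM P2 * F2) = embM (fstM (liftM P2)) * sndM F2 + sndM (liftM P2) * embM (fstM F2)"
      by (rule sndM_mult) (use P2c F2c in simp)
    finally show ?thesis using P2c Q2c F2c Dc Hc fF2 mult_carrier_mat[OF carr(3)[OF P2c] Hc]
        mult_carrier_mat[OF mult_carrier_mat[OF carr(3)[OF P2c] Hc] carr(3)[OF Q2c]] by (simp add: H_def[symmetric])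
  qed
  have Sent: "sndM F3 $$ (i, j) = (if i < r \<or> j < r then 0 else c * emb (B $$ (i - r, j - r)))"
    if "i < m" "j < n" for i j
  proof -
    have "sndM F3 $$ (i, j) = four_block_mat (0\<^sub>m r r) (0\<^sub>m r n') (0\<^sub>m m' r) (c \<cdot>\<^sub>m embM B) $$ (i, j)"
      by (simp only: sF3 ePHQ PHQ)
    also have "\<dots> = (if i < r \<or> j < r then 0 else c * emb (B $$ (i - r, j - r)))"
      using that mr P'(1) Q'(1) Hb'c by (auto simp: B_def)
    finally show ?thesis .
  qed
  have F3ent: "F3 $$ (i, j) = TE (D $$ (i, j)) (if i < r \<or> j < r then 0 else c * emb (B $$ (i - r, j - r)))"
    if "i < m" "j < n" for i j
  proof -
    have "te_fst (F3 $$ (i,j)) = D $$ (i,j)" using idx(1)[of i F3 j] that F3c fF3 by simp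
    moreover have "te_snd (F3 $$ (i,j)) = (if i < r \<or> j < r then 0 else c * emb (B $$ (i - r, j - r)))"
      using idx(2)[of i F3 j] that F3c Sent[OF that] by simp
    ultimately show ?thesis by (cases "F3 $$ (i,j)") simp
  qed
  define P where "P = liftM P2 * L * liftM P1"
  define Q where "Q = liftM Q1 * R * liftM Q2"
  have Pc: "P \<in> carrier_mat m m" unfolding P_def
    by (rule mult_carrier_mat[OF mult_carrier_mat[OF carr(4)[OF P2c] Lc] carr(4)[OF P1(1)]])
  have Qc: "Q \<in> carrier_mat n n" unfolding Q_def
    by (rule mult_carrier_mat[OF mult_carrier_mat[OF carr(4)[OF Q1(1)] Rc] carr(4)[OF Q2c]])
  have Pinv: "invertible_mat P" unfolding P_def
    by (rule inv_mult[OF inv_mult[OF liftM_inv[OF P2inv P2c] Linv carr(4)[OF P2c] Lc] liftM_inv[OF P1(2,1)]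
        mult_carrier_mat[OF carr(4)[OF P2c] Lc] carr(4)[OF P1(1)]])
  have Qinv: "invertible_mat Q" unfolding Q_def
    by (rule inv_mult[OF inv_mult[OF liftM_inv[OF Q1(2,1)] Rinv carr(4)[OF Q1(1)] Rc] liftM_inv[OF Q2inv Q2c]
        mult_carrier_mat[OF carr(4)[OF Q1(1)] Rc] carr(4)[OF Q2c]])
  have PMQ: "P * M * Q = F3"
    unfolding P_def Q_def F3_def F2_def F_def
    using carr(4)[OF P2c] carr(4)[OF Q2c] carr(4)[OF P1(1)] carr(4)[OF Q1(1)] Lc Rc M
    by (simp add: assoc_mult_mat[of _ m m _ m _ n] assoc_mult_mat[of _ m n _ n _ n] assoc_mult_mat[of _ m m _ n _ n])
  show "admits_diagonal_reduction M"
  proof (rule adrI)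
    show "P \<in> carrier_mat (dim_row M) (dim_row M)" "Q \<in> carrier_mat (dim_col M) (dim_col M)"
      using Pc Qc by (simp_all add: m_def n_def)
    show "invertible_mat P" "invertible_mat Q" by (fact Pinv, fact Qinv)
    fix i j assume ij: "i < dim_row M" "j < dim_col M" "i \<noteq> j"
    then have ij': "i < m" "j < n" by (simp_all add: m_def n_def)
    show "(P * M * Q) $$ (i, j) = 0"
    proof (cases "i < r \<or> j < r")
      case True
      then show ?thesis using F3ent[OF ij'] Doff[OF ij' ij(3)] PMQ by (simp add: TE_zero)
    next
      case False
      then have "B $$ (i - r, j - r) = 0" using Boff[of "i - r" "j - r"] ij' ij(3) mr by auto
      then show ?thesis using F3ent[OF ij'] Doff[OF ij' ij(3)] PMQ by (simp add: TE_zero)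
    qed
  next
    fix i assume i: "Suc i < dim_row M" "Suc i < dim_col M"
    then have i': "Suc i < m" "Suc i < n" by (simp_all add: m_def n_def)
    have e1: "(P * M * Q) $$ (i, i) = TE (D $$ (i, i)) (if i < r then 0 else c * emb (B $$ (i - r, i - r)))"
      using F3ent[of i i] i' PMQ by simp
    have e2: "(P * M * Q) $$ (Suc i, Suc i) = TE (D $$ (Suc i, Suc i))
       (if Suc i < r then 0 else c * emb (B $$ (Suc i - r, Suc i - r)))"
      using F3ent[of "Suc i" "Suc i"] i' PMQ by simp
    show "(P * M * Q) $$ (i, i) dvd (P * M * Q) $$ (Suc i, Suc i)"
    proof (cases "Suc i < r")
      case True
      then show ?thesis unfolding e1 e2 using Dch[OF i'] by (simp add: dvd1)
    next
      case False
      have D2: "D $$ (Suc i, Suc i) = 0" using Dent i' False by simp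
      show ?thesis
      proof (cases "i < r")
        case True
        have "D $$ (i, i) \<noteq> 0" using dnz[OF True] by (simp add: d_def)
        then show ?thesis unfolding e1 e2 D2 using True by (simp add: dvd2)
      next
        case False
        then have D1: "D $$ (i, i) = 0" using Dent i' by simp
        have "Suc (i - r) < m'" "Suc (i - r) < n'" using i' False mr by auto
        then have "B $$ (i - r, i - r) dvd B $$ (Suc (i - r), Suc (i - r))" by (rule Bch)
        moreover have "Suc i - r = Suc (i - r)" using False by simp
        ultimately show ?thesis unfolding e1 e2 D1 D2 using False by (simp add: dvd3)
      qed
    qed
  qed
qed

theorem corollary3p13:
  shows "elementary_divisor_ring TYPE('a::idom triv_ext_qf) \<longleftrightarrow>
         elementary_divisor_ring TYPE('a::idom)"
  using dir1 dir2 by blast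

end
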